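(* Let $\boldsymbol\gamma=(\gamma_1,\dots,\gamma_d,\gamma_{d+1})\in\mathbb R^{d+1}$ with $\gamma_i=-1$ for some $i$, $1\le i\le d$, and let $\mathbf n\in\mathbb N_0^d$ with $n_i\ge1$. Then $$P_{\mathbf n}^{(\gamma,\gamma_{d+1})}(x)=-(|\mathbf n|+\gamma_{d+1})\,x_i\,P_{\mathbf n-e_i}^{(\gamma+2e_i,\gamma_{d+1})}(x),$$ where $\gamma=(\gamma_1,\dots,\gamma_d)$.
   Context: $|x|=x_1+\dots+x_d$, $|\mathbf n|=n_1+\dots+n_d$, $e_i$ the standard basis of $\mathbb R^d$. For $(\gamma,\gamma_{d+1})\in\mathbb R^{d+1}$ and $\mathbf n\in\mathbb N_0^d$, on the interior of $T^d=\{x_i\ge0,|x|\le1\}$, $P_{\mathbf n}^{(\gamma,\gamma_{d+1})}(x)=x_1^{-\gamma_1}\cdots x_d^{-\gamma_d}(1-|x|)^{-\gamma_{d+1}}\frac{\partial^{|\mathbf n|}}{\partial x_1^{n_1}\cdots\partial x_d^{n_d}}\big[x_1^{\gamma_1+n_1}\cdots x_d^{\gamma_d+n_d}(1-|x|)^{\gamma_{d+1}+|\mathbf n|}\big]$. *)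

theory Defs
  imports "HOL-Analysis.Analysis"
begin

text \<open>Points of R^d are represented as functions nat => real; only the coordinates
  1..d are used. Multi-indices are functions nat => nat, again only 1..d used.\<close>

definition pdiff :: "nat \<Rightarrow> ((nat \<Rightarrow> real) \<Rightarrow> real) \<Rightarrow> (nat \<Rightarrow> real) \<Rightarrow> real" where
  "pdiff i f = (\<lambda>x. deriv (\<lambda>t. f (x(i := t))) (x i))"

fun mixed_diff :: "nat \<Rightarrow> (nat \<Rightarrow> nat) \<Rightarrow> ((nat \<Rightarrow> real) \<Rightarrow> real) \<Rightarrow> (nat \<Rightarrow> real) \<Rightarrow> real" where
  "mixed_diff 0 n f = f"
| "mixed_diff (Suc k) n f = mixed_diff k n ((pdiff (Suc k) ^^ n (Suc k)) f)"

definition simplex_interior :: "nat \<Rightarrow> (nat \<Rightarrow> real) set" where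
  "simplex_interior d = {x. (\<forall>i\<in>{1..d}. 0 < x i) \<and> (\<Sum>i=1..d. x i) < 1}"

text \<open>The Rodrigues-type simplex Jacobi polynomial P_n^(gamma, g)(x), gamma = (gamma_1..gamma_d),
  g = gamma_{d+1}.\<close>
definition simplex_P :: "nat \<Rightarrow> (nat \<Rightarrow> real) \<Rightarrow> real \<Rightarrow> (nat \<Rightarrow> nat) \<Rightarrow> (nat \<Rightarrow> real) \<Rightarrow> real" where
  "simplex_P d \<gamma> g n x =
     (\<Prod>i=1..d. x i powr (- \<gamma> i)) * (1 - (\<Sum>i=1..d. x i)) powr (- g) *
     mixed_diff d n
       (\<lambda>y. (\<Prod>i=1..d. y i powr (\<gamma> i + real (n i))) *
            (1 - (\<Sum>i=1..d. y i)) powr (g + real (\<Sum>i=1..d. n i))) x"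

end

theory Submission
  imports Defs
begin


fun mev :: "nat \<Rightarrow> real \<times> (nat \<Rightarrow> real) \<times> real \<Rightarrow> (nat \<Rightarrow> real) \<Rightarrow> real" where
  "mev d (c, e, b) y = c * (\<Prod>k=1..d. y k powr e k) * (1 - (\<Sum>k=1..d. y k)) powr b"

definition ev :: "nat \<Rightarrow> (real \<times> (nat \<Rightarrow> real) \<times> real) list \<Rightarrow> (nat \<Rightarrow> real) \<Rightarrow> real" where
  "ev d L y = (\<Sum>m\<leftarrow>L. mev d m y)"

fun mD :: "nat \<Rightarrow> nat \<Rightarrow> real \<times> (nat \<Rightarrow> real) \<times> real \<Rightarrow> (real \<times> (nat \<Rightarrow> real) \<times> real) list" where
  "mD d j (c, e, b) = (if j \<in> {1..d} then [(c * e j, e(j := e j - 1), b), (- c * b, e, b - 1)] else [])"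

definition LD where "LD d j L = concat (map (mD d j) L)"

lemma ev_Nil[simp]: "ev d [] y = 0" by (simp add: ev_def)
lemma ev_Cons[simp]: "ev d (m # L) y = mev d m y + ev d L y" by (simp add: ev_def)
lemma ev_append[simp]: "ev d (L @ M) y = ev d L y + ev d M y" by (simp add: ev_def)

lemma ev_LD: "ev d (LD d j L) y = (\<Sum>m\<leftarrow>L. ev d (mD d j m) y)"
  by (induction L) (auto simp: LD_def)

lemma prod_split: "j \<in> {1..d} \<Longrightarrow> (\<Prod>k=1..d. f k) = f j * (\<Prod>k\<in>{1..d}-{j}. f k)"
  for f :: "nat \<Rightarrow> real"
  by (simp add: prod.remove)

lemma sum_split: "j \<in> {1..d} \<Longrightarrow> (\<Sum>k=1..d. f k) = f j + (\<Sum>k\<in>{1..d}-{j}. f k)"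
  for f :: "nat \<Rightarrow> real"
  by (simp add: sum.remove)

lemma near_U:
  assumes "y \<in> simplex_interior d"
  shows "\<forall>\<^sub>F t in nhds (y j). y(j := t) \<in> simplex_interior d"
proof (cases "j \<in> {1..d}")
  case True
  define S where "S = (\<Sum>k\<in>{1..d}-{j}. y k)"
  have yS: "(\<Sum>k=1..d. y k) = y j + S" using sum_split[OF True] S_def by simp
  have pos: "0 < y j" "y j < 1 - S" using assms True yS by (auto simp: simplex_interior_def)
  have e1: "\<forall>\<^sub>F t in nhds (y j). 0 < t"
    using order_tendstoD(1)[OF filterlim_ident pos(1)] .
  have e2: "\<forall>\<^sub>F t in nhds (y j). t < 1 - S"
    using order_tendstoD(2)[OF filterlim_ident pos(2)] .
  show ?thesis using e1 e2
  proof eventually_elim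
    case (elim t)
    have "(\<Sum>k=1..d. (y(j:=t)) k) = t + S"
      using sum_split[OF True, of "y(j:=t)"] S_def by simp
    then show ?case using elim assms by (auto simp: simplex_interior_def)
  qed
next
  case False
  have "y(j := t) \<in> simplex_interior d" for t
  proof -
    have "(\<Sum>k=1..d. (y(j:=t)) k) = (\<Sum>k=1..d. y k)"
      by (rule sum.cong) (use False in auto)
    then show ?thesis using assms False by (auto simp: simplex_interior_def)
  qed
  then show ?thesis by simp
qed

lemma mev_DERIV:
  assumes y: "y \<in> simplex_interior d"
  shows "((\<lambda>t. mev d m (y(j := t))) has_real_derivative ev d (mD d j m) y) (at (y j))"
proof -
  obtain c e b where m: "m = (c, e, b)" by (cases m) auto
  show ?thesis
  proof (cases "j \<in> {1..d}")
    case False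
    have "mev d m (y(j := t)) = mev d m y" for t
    proof -
      have "(\<Prod>k=1..d. (y(j:=t)) k powr e k) = (\<Prod>k=1..d. y k powr e k)"
        by (rule prod.cong) (use False in auto)
      moreover have "(\<Sum>k=1..d. (y(j:=t)) k) = (\<Sum>k=1..d. y k)"
        by (rule sum.cong) (use False in auto)
      ultimately show ?thesis by (simp add: m)
    qed
    then have "(\<lambda>t. mev d m (y(j := t))) = (\<lambda>t. mev d m y)" by auto
    moreover have "ev d (mD d j m) y = 0" by (simp only: m mD.simps if_not_P[OF False] ev_Nil)
    ultimately show ?thesis by simp
  next
    case True
    define S where "S = (\<Sum>k\<in>{1..d}-{j}. y k)"
    define P where "P = (\<Prod>k\<in>{1..d}-{j}. y k powr e k)"
    have yS: "(\<Sum>k=1..d. y k) = y j + S" using sum_split[OF True] S_def by simp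
    have pos: "0 < y j" "0 < 1 - (y j + S)" using y True yS by (auto simp: simplex_interior_def)
    have fn: "mev d m (y(j := t)) = c * (t powr e j * P) * (1 - (t + S)) powr b" for t
    proof -
      have "(\<Prod>k=1..d. (y(j:=t)) k powr e k) = t powr e j * P"
        using prod_split[OF True, of "\<lambda>k. (y(j:=t)) k powr e k"] P_def by simp
      moreover have "(\<Sum>k=1..d. (y(j:=t)) k) = t + S"
        using sum_split[OF True, of "y(j:=t)"] S_def by simp
      ultimately show ?thesis by (simp add: m)
    qed
    have P2: "(\<Prod>k=1..d. y k powr (e(j := e j - 1)) k) = y j powr (e j - 1) * P"
    proof -
      have "(\<Prod>k\<in>{1..d}-{j}. y k powr (e(j := e j - 1)) k) = P"
        unfolding P_def by (rule prod.cong) auto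
      then show ?thesis using prod_split[OF True, of "\<lambda>k. y k powr (e(j := e j - 1)) k"] by simp
    qed
    have P1: "(\<Prod>k=1..d. y k powr e k) = y j powr e j * P"
      using prod_split[OF True, of "\<lambda>k. y k powr e k"] P_def by simp
    have D1: "((\<lambda>t. t powr e j) has_real_derivative e j * y j powr (e j - 1)) (at (y j))"
      using has_real_derivative_powr[OF pos(1)] .
    have D2: "((\<lambda>t. (1 - (t + S)) powr b) has_real_derivative b * (1 - (y j + S)) powr (b - of_nat 1) * (-1)) (at (y j))"
      by (rule DERIV_fun_powr) (use pos in \<open>auto intro!: derivative_eq_intros\<close>)
    have D: "((\<lambda>t. c * (t powr e j * P) * (1 - (t + S)) powr b) has_real_derivative
       c * ((e j * y j powr (e j - 1)) * P) * (1 - (y j + S)) powr b +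
       c * (y j powr e j * P) * (b * (1 - (y j + S)) powr (b - of_nat 1) * (-1))) (at (y j))"
      apply (rule DERIV_cong[OF DERIV_mult[OF DERIV_cmult[OF DERIV_mult[OF D1 DERIV_const[of P]]] D2, of c]])
      by (simp add: algebra_simps)
    have E: "ev d (mD d j m) y = c * ((e j * y j powr (e j - 1)) * P) * (1 - (y j + S)) powr b +
       c * (y j powr e j * P) * (b * (1 - (y j + S)) powr (b - of_nat 1) * (-1))"
      apply (simp only: m mD.simps if_P[OF True] ev_Cons ev_Nil mev.simps P1 P2 yS)
      by (simp add: algebra_simps)
    show ?thesis unfolding fn E using D .
  qed
qed

lemma LD_Cons[simp]: "LD d j (m # L) = mD d j m @ LD d j L" by (simp add: LD_def)
lemma LD_Nil[simp]: "LD d j [] = []" by (simp add: LD_def)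
lemma LD_append[simp]: "LD d j (A @ B) = LD d j A @ LD d j B" by (simp add: LD_def)

lemma ev_DERIV:
  assumes y: "y \<in> simplex_interior d"
  shows "((\<lambda>t. ev d L (y(j := t))) has_real_derivative ev d (LD d j L) y) (at (y j))"
proof (induction L)
  case Nil then show ?case by simp
next
  case (Cons m L)
  show ?case using DERIV_add[OF mev_DERIV[OF y, of m j] Cons] by (simp add: fun_upd_def)
qed

definition good where "good d f \<longleftrightarrow> (\<exists>L. \<forall>y\<in>simplex_interior d. f y = ev d L y)"

lemma good_DERIV_L:
  assumes L: "\<forall>z\<in>simplex_interior d. f z = ev d L z" and y: "y \<in> simplex_interior d"
  shows "((\<lambda>t. f (y(j := t))) has_real_derivative ev d (LD d j L) y) (at (y j))"
proof -
  have "\<forall>\<^sub>F t in nhds (y j). f (y(j := t)) = ev d L (y(j := t))"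
    using near_U[OF y, of j] by eventually_elim (use L in auto)
  then show ?thesis
    by (subst DERIV_cong_ev[OF refl _ refl]) (auto intro: ev_DERIV[OF y])
qed

lemma pdiff_L:
  assumes L: "\<forall>z\<in>simplex_interior d. f z = ev d L z" and y: "y \<in> simplex_interior d"
  shows "pdiff j f y = ev d (LD d j L) y"
  unfolding pdiff_def using DERIV_imp_deriv[OF good_DERIV_L[OF L y, of j]] by simp

lemma good_pdiff: "good d f \<Longrightarrow> good d (pdiff j f)"
  unfolding good_def using pdiff_L by blast

lemma good_DERIV:
  assumes "good d f" "y \<in> simplex_interior d"
  shows "((\<lambda>t. f (y(j := t))) has_real_derivative pdiff j f y) (at (y j))"
proof -
  obtain L where L: "\<forall>z\<in>simplex_interior d. f z = ev d L z" using assms(1) good_def by blast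
  show ?thesis using good_DERIV_L[OF L assms(2), of j] pdiff_L[OF L assms(2), of j] by simp
qed

lemma pdiff_cmult:
  assumes "good d f" "y \<in> simplex_interior d"
  shows "pdiff j (\<lambda>z. a * f z) y = a * pdiff j f y"
  unfolding pdiff_def using DERIV_imp_deriv[OF DERIV_cmult[OF good_DERIV[OF assms, of j], of a]]
  by (simp add: pdiff_def)

lemma pdiff_add:
  assumes "good d f" "good d g" "y \<in> simplex_interior d"
  shows "pdiff j (\<lambda>z. f z + g z) y = pdiff j f y + pdiff j g y"
  unfolding pdiff_def using DERIV_imp_deriv[OF DERIV_add[OF good_DERIV[OF assms(1,3), of j] good_DERIV[OF assms(2,3), of j]]]
  by (simp add: pdiff_def)

fun scm where "scm a (c, e, b) = (a * c, e, b)"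
lemma ev_scm: "ev d (map (scm a) L) y = a * ev d L y"
proof (induction L)
  case Nil then show ?case by simp
next
  case (Cons m L) then show ?case by (cases m) (simp add: algebra_simps)
qed

lemma good_cmult: "good d f \<Longrightarrow> good d (\<lambda>z. a * f z)"
proof -
  assume "good d f"
  then obtain L where L: "\<forall>z\<in>simplex_interior d. f z = ev d L z" using good_def by blast
  have "\<forall>z\<in>simplex_interior d. a * f z = ev d (map (scm a) L) z" using L ev_scm by simp
  then show ?thesis unfolding good_def by blast
qed

lemma good_add: "good d f \<Longrightarrow> good d g \<Longrightarrow> good d (\<lambda>z. f z + g z)"
proof -
  assume "good d f" "good d g"
  then obtain L M where L: "\<forall>z\<in>simplex_interior d. f z = ev d L z"
     and M: "\<forall>z\<in>simplex_interior d. g z = ev d M z" using good_def by metis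
  have "\<forall>z\<in>simplex_interior d. f z + g z = ev d (L @ M) z" using L M by simp
  then show ?thesis unfolding good_def by blast
qed

fun shm where "shm i p (c, e, b) = (c, e(i := e i + p), b)"
lemma mev_shm:
  assumes i: "i \<in> {1..d}" and y: "y \<in> simplex_interior d"
  shows "mev d (shm i p m) y = y i powr p * mev d m y"
proof -
  obtain c e b where m: "m = (c, e, b)" by (cases m) auto
  have yi: "0 < y i" using i y by (auto simp: simplex_interior_def)
  have Q: "(\<Prod>k\<in>{1..d}-{i}. y k powr (e(i := e i + p)) k) = (\<Prod>k\<in>{1..d}-{i}. y k powr e k)"
    by (rule prod.cong) auto
  have "(\<Prod>k=1..d. y k powr (e(i := e i + p)) k) = y i powr p * (\<Prod>k=1..d. y k powr e k)"
    using prod_split[OF i, of "\<lambda>k. y k powr (e(i := e i + p)) k"] prod_split[OF i, of "\<lambda>k. y k powr e k"] Q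
    by (simp add: powr_add algebra_simps)
  then show ?thesis by (simp add: m)
qed

lemma ev_shm:
  assumes i: "i \<in> {1..d}" and y: "y \<in> simplex_interior d"
  shows "ev d (map (shm i p) L) y = y i powr p * ev d L y"
  by (induction L) (simp_all add: mev_shm[OF assms] algebra_simps)

lemma good_mulpow: "i \<in> {1..d} \<Longrightarrow> good d f \<Longrightarrow> good d (\<lambda>z. z i powr p * f z)"
proof -
  assume i: "i \<in> {1..d}" and "good d f"
  then obtain L where L: "\<forall>z\<in>simplex_interior d. f z = ev d L z" using good_def by blast
  have "\<forall>z\<in>simplex_interior d. z i powr p * f z = ev d (map (shm i p) L) z" using L ev_shm[OF i] by simp
  then show ?thesis unfolding good_def by blast
qed

lemma pdiff_mulpow_other:
  assumes "j \<noteq> i" "good d f" "y \<in> simplex_interior d"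
  shows "pdiff j (\<lambda>z. z i powr p * f z) y = y i powr p * pdiff j f y"
proof -
  have "(\<lambda>t. (y(j := t)) i powr p * f (y(j := t))) = (\<lambda>t. y i powr p * f (y(j := t)))"
    using assms(1) by auto
  then show ?thesis
    unfolding pdiff_def using DERIV_imp_deriv[OF DERIV_cmult[OF good_DERIV[OF assms(2,3), of j], of "y i powr p"]]
    by (simp add: pdiff_def)
qed

lemma pdiff_mulpow_same:
  assumes i: "i \<in> {1..d}" and f: "good d f" and y: "y \<in> simplex_interior d"
  shows "pdiff i (\<lambda>z. z i powr p * f z) y = p * y i powr (p - 1) * f y + y i powr p * pdiff i f y"
proof -
  have yi: "0 < y i" using i y by (auto simp: simplex_interior_def)
  have "(\<lambda>t. (y(i := t)) i powr p * f (y(i := t))) = (\<lambda>t. t powr p * f (y(i := t)))"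
    by auto
  moreover have "((\<lambda>t. t powr p * f (y(i := t))) has_real_derivative
      p * y i powr (p - 1) * f y + y i powr p * pdiff i f y) (at (y i))"
    apply (rule DERIV_cong[OF DERIV_mult[OF has_real_derivative_powr[OF yi] good_DERIV[OF f y, of i]]])
    by (simp add: algebra_simps)
  ultimately show ?thesis unfolding pdiff_def by (simp add: DERIV_imp_deriv)
qed

lemma mD_out: "i \<notin> {1..d} \<Longrightarrow> mD d i m = []"
  by (cases m) (simp only: mD.simps if_not_P if_False)

lemma LD_out: assumes "i \<notin> {1..d}" shows "LD d i L = []"
  by (induction L) (simp_all only: LD_Nil LD_Cons mD_out[OF assms] append_Nil)

lemma mD_comm: "ev d (LD d i (mD d j m)) y = ev d (LD d j (mD d i m)) y"
proof -
  obtain c e b where m: "m = (c, e, b)" by (cases m) auto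
  show ?thesis
  proof (cases "i = j")
    case False
    show ?thesis
    proof (cases "i \<in> {1..d} \<and> j \<in> {1..d}")
      case True
      then have i: "i \<in> {1..d}" and j: "j \<in> {1..d}" by auto
      show ?thesis
        apply (simp only: m mD.simps if_P[OF i] if_P[OF j] LD_Cons LD_Nil append_Nil2 ev_append ev_Cons ev_Nil
            fun_upd_same fun_upd_other[OF False] fun_upd_other[OF not_sym[OF False]] fun_upd_twist[OF False]
            mev.simps)
        by (simp add: algebra_simps)
    next
      case False
      then consider "i \<notin> {1..d}" | "j \<notin> {1..d}" by blast
      then show ?thesis
      proof cases
        case 1 then show ?thesis by (simp only: LD_out[OF 1] mD_out[OF 1] LD_Nil)
      next
        case 2 then show ?thesis by (simp only: LD_out[OF 2] mD_out[OF 2] LD_Nil)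
      qed
    qed
  qed simp
qed

lemma LD_comm: "ev d (LD d i (LD d j L)) y = ev d (LD d j (LD d i L)) y"
proof (induction L)
  case (Cons m L)
  have "ev d (LD d i (LD d j (m # L))) y = ev d (LD d i (mD d j m)) y + ev d (LD d i (LD d j L)) y" by simp
  also have "\<dots> = ev d (LD d j (mD d i m)) y + ev d (LD d j (LD d i L)) y" using Cons.IH mD_comm[of d i j m y] by simp
  also have "\<dots> = ev d (LD d j (LD d i (m # L))) y" by simp
  finally show ?case .
qed simp

lemma pdiff_comm:
  assumes "good d f" "y \<in> simplex_interior d"
  shows "pdiff i (pdiff j f) y = pdiff j (pdiff i f) y"
proof -
  obtain L where L: "\<forall>z\<in>simplex_interior d. f z = ev d L z" using assms(1) good_def by blast
  have Li: "\<forall>z\<in>simplex_interior d. pdiff i f z = ev d (LD d i L) z" using pdiff_L[OF L] by blast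
  have Lj: "\<forall>z\<in>simplex_interior d. pdiff j f z = ev d (LD d j L) z" using pdiff_L[OF L] by blast
  have "pdiff i (pdiff j f) y = ev d (LD d i (LD d j L)) y" using pdiff_L[OF Lj assms(2)] .
  also have "\<dots> = ev d (LD d j (LD d i L)) y" by (rule LD_comm)
  also have "\<dots> = pdiff j (pdiff i f) y" using pdiff_L[OF Li assms(2)] by simp
  finally show ?thesis .
qed

lemma pdiff_cong:
  assumes "good d f" "\<forall>z\<in>simplex_interior d. f z = g z" "y \<in> simplex_interior d"
  shows "pdiff j f y = pdiff j g y"
proof -
  obtain L where L: "\<forall>z\<in>simplex_interior d. f z = ev d L z" using assms(1) good_def by blast
  have L': "\<forall>z\<in>simplex_interior d. g z = ev d L z" using L assms(2) by auto
  show ?thesis using pdiff_L[OF L assms(3)] pdiff_L[OF L' assms(3)] by simp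
qed



definition nice :: "nat \<Rightarrow> (((nat\<Rightarrow>real)\<Rightarrow>real) \<Rightarrow> ((nat\<Rightarrow>real)\<Rightarrow>real)) \<Rightarrow> bool" where
"nice d Op \<longleftrightarrow> (\<forall>f. good d f \<longrightarrow> good d (Op f) \<and>
   (\<forall>g. (\<forall>z\<in>simplex_interior d. f z = g z) \<longrightarrow> (\<forall>z\<in>simplex_interior d. Op f z = Op g z)) \<and>
   (\<forall>a. \<forall>z\<in>simplex_interior d. Op (\<lambda>y. a * f y) z = a * Op f z) \<and>
   (\<forall>i. \<forall>z\<in>simplex_interior d. pdiff i (Op f) z = Op (pdiff i f) z))"

definition avoids :: "nat \<Rightarrow> nat \<Rightarrow> (((nat\<Rightarrow>real)\<Rightarrow>real) \<Rightarrow> ((nat\<Rightarrow>real)\<Rightarrow>real)) \<Rightarrow> bool" where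
"avoids d i Op \<longleftrightarrow> (\<forall>f p. good d f \<longrightarrow>
   (\<forall>z\<in>simplex_interior d. Op (\<lambda>y. y i powr p * f y) z = z i powr p * Op f z))"

lemma nice_good: "nice d Op \<Longrightarrow> good d f \<Longrightarrow> good d (Op f)"
  unfolding nice_def by blast
lemma nice_cong: "nice d Op \<Longrightarrow> good d f \<Longrightarrow> (\<And>z. z \<in> simplex_interior d \<Longrightarrow> f z = g z)
   \<Longrightarrow> z \<in> simplex_interior d \<Longrightarrow> Op f z = Op g z"
  unfolding nice_def by blast
lemma nice_cmult: "nice d Op \<Longrightarrow> good d f \<Longrightarrow> z \<in> simplex_interior d \<Longrightarrow> Op (\<lambda>y. a * f y) z = a * Op f z"
  unfolding nice_def by blast
lemma nice_comm: "nice d Op \<Longrightarrow> good d f \<Longrightarrow> z \<in> simplex_interior d \<Longrightarrow> pdiff i (Op f) z = Op (pdiff i f) z"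
  unfolding nice_def by blast
lemma avoidsD: "avoids d i Op \<Longrightarrow> good d f \<Longrightarrow> z \<in> simplex_interior d \<Longrightarrow> Op (\<lambda>y. y i powr p * f y) z = z i powr p * Op f z"
  unfolding avoids_def by blast

lemma nice_pdiff: "nice d (pdiff j)"
  unfolding nice_def using good_pdiff pdiff_cong pdiff_cmult pdiff_comm by blast

lemma avoids_pdiff: "j \<noteq> i \<Longrightarrow> avoids d i (pdiff j)"
  unfolding avoids_def using pdiff_mulpow_other by blast

lemma nice_id: "nice d (\<lambda>f. f)"
  unfolding nice_def by blast

lemma avoids_id: "avoids d i (\<lambda>f. f)"
  unfolding avoids_def by blast

lemma nice_comp:
  assumes A: "nice d A" and B: "nice d B"
  shows "nice d (\<lambda>f. A (B f))"
  unfolding nice_def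
proof (intro allI impI conjI ballI)
  fix f assume f: "good d f"
  have Bf: "good d (B f)" using nice_good[OF B f] .
  show "good d (A (B f))" using nice_good[OF A Bf] .
  fix g z assume fg: "\<forall>z\<in>simplex_interior d. f z = g z" and z: "z \<in> simplex_interior d"
  show "A (B f) z = A (B g) z"
    by (rule nice_cong[OF A Bf _ z]) (rule nice_cong[OF B f], use fg in auto)
next
  fix f a z assume f: "good d f" and z: "z \<in> simplex_interior d"
  have Bf: "good d (B f)" using nice_good[OF B f] .
  have Baf: "good d (B (\<lambda>y. a * f y))" using nice_good[OF B good_cmult[OF f]] .
  have "A (B (\<lambda>y. a * f y)) z = A (\<lambda>y. a * B f y) z"
    by (rule nice_cong[OF A Baf _ z]) (rule nice_cmult[OF B f])
  also have "\<dots> = a * A (B f) z" by (rule nice_cmult[OF A Bf z])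
  finally show "A (B (\<lambda>y. a * f y)) z = a * A (B f) z" .
next
  fix f i z assume f: "good d f" and z: "z \<in> simplex_interior d"
  have Bf: "good d (B f)" using nice_good[OF B f] .
  have "pdiff i (A (B f)) z = A (pdiff i (B f)) z" by (rule nice_comm[OF A Bf z])
  also have "\<dots> = A (B (pdiff i f)) z"
    by (rule nice_cong[OF A good_pdiff[OF Bf] _ z]) (rule nice_comm[OF B f])
  finally show "pdiff i (A (B f)) z = A (B (pdiff i f)) z" .
qed

lemma avoids_comp:
  assumes i: "i \<in> {1..d}" and A: "nice d A" "avoids d i A" and B: "nice d B" "avoids d i B"
  shows "avoids d i (\<lambda>f. A (B f))"
  unfolding avoids_def
proof (intro allI impI ballI)
  fix f p z assume f: "good d f" and z: "z \<in> simplex_interior d"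
  have Bf: "good d (B f)" using nice_good[OF B(1) f] .
  have Bpf: "good d (B (\<lambda>y. y i powr p * f y))" using nice_good[OF B(1) good_mulpow[OF i f]] .
  have "A (B (\<lambda>y. y i powr p * f y)) z = A (\<lambda>y. y i powr p * B f y) z"
    by (rule nice_cong[OF A(1) Bpf _ z]) (rule avoidsD[OF B(2) f])
  also have "\<dots> = z i powr p * A (B f) z" by (rule avoidsD[OF A(2) Bf z])
  finally show "A (B (\<lambda>y. y i powr p * f y)) z = z i powr p * A (B f) z" .
qed

lemma nice_funpow: "nice d (pdiff j ^^ m)"
proof (induction m)
  case 0 then show ?case using nice_id by (simp add: id_def)
next
  case (Suc m)
  have "pdiff j ^^ Suc m = (\<lambda>f. pdiff j ((pdiff j ^^ m) f))" by auto
  then show ?case using nice_comp[OF nice_pdiff Suc] by simp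
qed

lemma avoids_funpow: "i \<in> {1..d} \<Longrightarrow> j \<noteq> i \<Longrightarrow> avoids d i (pdiff j ^^ m)"
proof (induction m)
  case 0 then show ?case using avoids_id by (simp add: id_def)
next
  case (Suc m)
  have "pdiff j ^^ Suc m = (\<lambda>f. pdiff j ((pdiff j ^^ m) f))" by auto
  then show ?case using avoids_comp[OF Suc.prems(1) nice_pdiff avoids_pdiff[OF Suc.prems(2)] nice_funpow Suc.IH[OF Suc.prems]] by simp
qed

fun rd :: "nat \<Rightarrow> nat \<Rightarrow> (nat \<Rightarrow> nat) \<Rightarrow> ((nat \<Rightarrow> real) \<Rightarrow> real) \<Rightarrow> (nat \<Rightarrow> real) \<Rightarrow> real" where
  "rd i 0 n f = f"
| "rd i (Suc k) n f = rd i k n ((pdiff (i + Suc k) ^^ n (i + Suc k)) f)"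

lemma mixed_rd: "mixed_diff (i + k) n f = mixed_diff i n (rd i k n f)"
  by (induction k arbitrary: f) auto

lemma rd_cong_n: "(\<And>j. j \<in> {i<..i+k} \<Longrightarrow> n j = n' j) \<Longrightarrow> rd i k n f = rd i k n' f"
  by (induction k arbitrary: f) auto

lemma mixed_cong_n: "(\<And>j. j \<in> {1..k} \<Longrightarrow> n j = n' j) \<Longrightarrow> mixed_diff k n f = mixed_diff k n' f"
  by (induction k arbitrary: f) auto

lemma nice_rd: "nice d (rd i k n)"
proof (induction k)
  case 0
  have "rd i 0 n = (\<lambda>f. f)" by auto
  then show ?case using nice_id by simp
next
  case (Suc k)
  have "rd i (Suc k) n = (\<lambda>f. rd i k n ((pdiff (i + Suc k) ^^ n (i + Suc k)) f))" by auto
  then show ?case using nice_comp[OF Suc nice_funpow] by simp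
qed

lemma avoids_rd: "i \<in> {1..d} \<Longrightarrow> avoids d i (rd i k n)"
proof (induction k)
  case 0
  have "rd i 0 n = (\<lambda>f. f)" by auto
  then show ?case using avoids_id by simp
next
  case (Suc k)
  have "rd i (Suc k) n = (\<lambda>f. rd i k n ((pdiff (i + Suc k) ^^ n (i + Suc k)) f))" by auto
  then show ?case using avoids_comp[OF Suc.prems nice_rd Suc.IH[OF Suc.prems] nice_funpow avoids_funpow[OF Suc.prems]] by simp
qed

lemma nice_mixed: "nice d (mixed_diff k n)"
proof (induction k)
  case 0
  have "mixed_diff 0 n = (\<lambda>f. f)" by auto
  then show ?case using nice_id by simp
next
  case (Suc k)
  have "mixed_diff (Suc k) n = (\<lambda>f. mixed_diff k n ((pdiff (Suc k) ^^ n (Suc k)) f))" by auto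
  then show ?case using nice_comp[OF Suc nice_funpow] by simp
qed

lemma avoids_mixed: "i \<in> {1..d} \<Longrightarrow> k < i \<Longrightarrow> avoids d i (mixed_diff k n)"
proof (induction k)
  case 0
  have "mixed_diff 0 n = (\<lambda>f. f)" by auto
  then show ?case using avoids_id by simp
next
  case (Suc k)
  have "mixed_diff (Suc k) n = (\<lambda>f. mixed_diff k n ((pdiff (Suc k) ^^ n (Suc k)) f))" by auto
  then show ?case using avoids_comp[OF Suc.prems(1) nice_mixed Suc.IH nice_funpow avoids_funpow] Suc.prems by simp
qed



lemma funpow_Suc_app: "(f ^^ Suc m) x = (f ^^ m) (f x)"
  by (simp add: funpow_Suc_right del: funpow.simps)

lemma oneD:
  assumes i: "i \<in> {1..d}"
  shows "good d G \<Longrightarrow> y \<in> simplex_interior d \<Longrightarrow>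
    y i * (pdiff i ^^ Suc m) (\<lambda>z. z i powr real m * G z) y =
    (pdiff i ^^ m) (\<lambda>z. z i powr (real m + 1) * pdiff i G z) y"
proof (induction m arbitrary: G y)
  case 0
  have yi: "0 < y i" using i 0 by (auto simp: simplex_interior_def)
  show ?case using pdiff_mulpow_same[OF i 0(1) 0(2), of 0] yi by simp
next
  case (Suc m)
  note G = Suc.prems(1) and y = Suc.prems(2)
  have pos: "\<And>z. z \<in> simplex_interior d \<Longrightarrow> 0 < z i" using i by (auto simp: simplex_interior_def)
  define G1 where "G1 = (\<lambda>z. (real m + 1) * G z + z i powr 1 * pdiff i G z)"
  have gDG: "good d (pdiff i G)" using good_pdiff[OF G] .
  have gG1: "good d G1" unfolding G1_def
    by (intro good_add good_cmult good_mulpow[OF i] G gDG)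
  have Eq1: "pdiff i (\<lambda>z. z i powr real (Suc m) * G z) z = z i powr real m * G1 z"
    if z: "z \<in> simplex_interior d" for z
  proof -
    have zi: "0 < z i" using pos[OF z] .
    show ?thesis unfolding pdiff_mulpow_same[OF i G z] G1_def
      using zi by (simp add: powr_add algebra_simps)
  qed
  have g1: "good d (pdiff i (\<lambda>z. z i powr real (Suc m) * G z))"
    by (intro good_pdiff good_mulpow[OF i] G)
  have "y i * (pdiff i ^^ Suc (Suc m)) (\<lambda>z. z i powr real (Suc m) * G z) y =
        y i * (pdiff i ^^ Suc m) (pdiff i (\<lambda>z. z i powr real (Suc m) * G z)) y"
    by (simp only: funpow_Suc_app)
  also have "\<dots> = y i * (pdiff i ^^ Suc m) (\<lambda>z. z i powr real m * G1 z) y"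
  proof -
    have "(pdiff i ^^ Suc m) (pdiff i (\<lambda>z. z i powr real (Suc m) * G z)) y = (pdiff i ^^ Suc m) (\<lambda>z. z i powr real m * G1 z) y"
      by (rule nice_cong[OF nice_funpow g1 Eq1 y])
    then show ?thesis by simp
  qed
  also have "\<dots> = (pdiff i ^^ m) (\<lambda>z. z i powr (real m + 1) * pdiff i G1 z) y"
    by (rule Suc.IH[OF gG1 y])
  also have "\<dots> = (pdiff i ^^ m) (pdiff i (\<lambda>z. z i powr (real (Suc m) + 1) * pdiff i G z)) y"
  proof (rule nice_cong[OF nice_funpow _ _ y])
    show "good d (\<lambda>z. z i powr (real m + 1) * pdiff i G1 z)"
      by (intro good_mulpow[OF i] good_pdiff gG1)
    fix z assume z: "z \<in> simplex_interior d"
    have zi: "0 < z i" using pos[OF z] .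
    have a: "pdiff i G1 z = (real m + 1) * pdiff i G z + (1 * z i powr (1 - 1) * pdiff i G z + z i powr 1 * pdiff i (pdiff i G) z)"
      unfolding G1_def
      by (simp only: pdiff_add[OF good_cmult[OF G] good_mulpow[OF i gDG] z] pdiff_cmult[OF G z]
           pdiff_mulpow_same[OF i gDG z])
    have b: "pdiff i (\<lambda>z. z i powr (real (Suc m) + 1) * pdiff i G z) z =
       (real (Suc m) + 1) * z i powr (real (Suc m) + 1 - 1) * pdiff i G z + z i powr (real (Suc m) + 1) * pdiff i (pdiff i G) z"
      by (rule pdiff_mulpow_same[OF i gDG z])
    show "z i powr (real m + 1) * pdiff i G1 z = pdiff i (\<lambda>z. z i powr (real (Suc m) + 1) * pdiff i G z) z"
      unfolding a b using zi by (simp add: powr_add algebra_simps power2_eq_square)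
  qed
  also have "\<dots> = (pdiff i ^^ Suc m) (\<lambda>z. z i powr (real (Suc m) + 1) * pdiff i G z) y"
    by (simp only: funpow_Suc_app)
  finally show ?case .
qed



lemma good_cong: "good d f \<Longrightarrow> (\<And>z. z \<in> simplex_interior d \<Longrightarrow> f z = g z) \<Longrightarrow> good d g"
  unfolding good_def by metis

lemma good_mev: "good d (mev d m)"
  unfolding good_def by (rule exI[of _ "[m]"]) simp

theorem lemma4p2:
  fixes d i :: nat and \<gamma> :: "nat \<Rightarrow> real" and g :: real
    and n :: "nat \<Rightarrow> nat" and x :: "nat \<Rightarrow> real"
  assumes "1 \<le> i" "i \<le> d"
    and "\<gamma> i = -1"
    and "1 \<le> n i"
    and "x \<in> simplex_interior d"
  shows "simplex_P d \<gamma> g n x =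
    - (real (\<Sum>j=1..d. n j) + g) * x i *
      simplex_P d (\<gamma>(i := \<gamma> i + 2)) g (n(i := n i - 1)) x"
proof -
  have i: "i \<in> {1..d}" using assms by auto
  have xU: "x \<in> simplex_interior d" by fact
  have pos: "\<And>z. z \<in> simplex_interior d \<Longrightarrow> 0 < z i" using i by (auto simp: simplex_interior_def)
  obtain i0 where i0: "i = Suc i0" using assms(1) by (cases i) auto
  obtain k where k: "d = i + k" using assms(2) le_Suc_ex by blast
  obtain m where m: "n i = Suc m" using assms(4) by (cases "n i") auto
  define a where "a = g + real (\<Sum>j=1..d. n j)"
  define \<gamma>' where "\<gamma>' = \<gamma>(i := \<gamma> i + 2)"
  define n' where "n' = n(i := n i - 1)"
  define e0 where "e0 = (\<lambda>k. if k = i then 0 else \<gamma> k + real (n k))"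
  define G where "G = mev d (1, e0, a)"
  define K where "K = mev d (1, e0, a - 1)"
  define F where "F = (\<lambda>y. (\<Prod>k=1..d. y k powr (\<gamma> k + real (n k))) *
            (1 - (\<Sum>k=1..d. y k)) powr (g + real (\<Sum>k=1..d. n k)))"
  define H where "H = (\<lambda>y. (\<Prod>k=1..d. y k powr (\<gamma>' k + real (n' k))) *
            (1 - (\<Sum>k=1..d. y k)) powr (g + real (\<Sum>k=1..d. n' k)))"
  have sumn': "real (\<Sum>k=1..d. n' k) = real (\<Sum>k=1..d. n k) - 1"
  proof -
    have "(\<Sum>k=1..d. n k) = n i + (\<Sum>k\<in>{1..d}-{i}. n k)" using i by (simp add: sum.remove)
    moreover have "(\<Sum>k=1..d. n' k) = n' i + (\<Sum>k\<in>{1..d}-{i}. n' k)" using i by (simp add: sum.remove)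
    moreover have "(\<Sum>k\<in>{1..d}-{i}. n' k) = (\<Sum>k\<in>{1..d}-{i}. n k)" unfolding n'_def by (rule sum.cong) auto
    ultimately show ?thesis unfolding n'_def using m by simp
  qed
  have Pe0: "(\<Prod>k\<in>{1..d}-{i}. y k powr e0 k) = (\<Prod>k\<in>{1..d}-{i}. y k powr (\<gamma> k + real (n k)))" for y
    unfolding e0_def by (rule prod.cong) auto
  have FG: "F y = y i powr real m * G y" if y: "y \<in> simplex_interior d" for y
  proof -
    have yi: "0 < y i" using pos[OF y] .
    show ?thesis unfolding F_def G_def
      using prod_split[OF i, of "\<lambda>k. y k powr (\<gamma> k + real (n k))"] prod_split[OF i, of "\<lambda>k. y k powr e0 k"] Pe0[of y]
        assms(3) m yi by (simp add: e0_def a_def)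
  qed
  have HK: "H y = y i powr (real m + 1) * K y" if y: "y \<in> simplex_interior d" for y
  proof -
    have yi: "0 < y i" using pos[OF y] .
    have P': "(\<Prod>k\<in>{1..d}-{i}. y k powr (\<gamma>' k + real (n' k))) = (\<Prod>k\<in>{1..d}-{i}. y k powr (\<gamma> k + real (n k)))"
      unfolding \<gamma>'_def n'_def by (rule prod.cong) auto
    have ex: "g + real (\<Sum>k=1..d. n' k) = a - 1" using sumn' a_def by simp
    have "\<gamma>' i + real (n' i) = real m + 1" unfolding \<gamma>'_def n'_def using assms(3) m by simp
    then show ?thesis unfolding H_def K_def ex
      using prod_split[OF i, of "\<lambda>k. y k powr (\<gamma>' k + real (n' k))"] prod_split[OF i, of "\<lambda>k. y k powr e0 k"] Pe0[of y] P'
        yi sumn' by (simp add: e0_def a_def algebra_simps)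
  qed
  have gG: "good d G" unfolding G_def by (rule good_mev)
  have gK: "good d K" unfolding K_def by (rule good_mev)
  have gF: "good d F" using good_cong[OF good_mulpow[OF i gG] FG[symmetric]] by simp
  have gH: "good d H" using good_cong[OF good_mulpow[OF i gK] HK[symmetric]] by simp
  have DG: "pdiff i G y = - a * K y" if y: "y \<in> simplex_interior d" for y
  proof -
    have L: "\<forall>z\<in>simplex_interior d. G z = ev d [(1, e0, a)] z" unfolding G_def by simp
    show ?thesis using pdiff_L[OF L y, of i] i by (simp add: K_def e0_def)
  qed
  define Gh where "Gh = rd i k n G"
  define Kh where "Kh = rd i k n K"
  define Z where "Z = (pdiff i ^^ Suc m) (rd i k n F)"
  define W where "W = (pdiff i ^^ m) (rd i k n H)"
  have gGh: "good d Gh" unfolding Gh_def by (rule nice_good[OF nice_rd gG])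
  have gKh: "good d Kh" unfolding Kh_def by (rule nice_good[OF nice_rd gK])
  have grF: "good d (rd i k n F)" by (rule nice_good[OF nice_rd gF])
  have grH: "good d (rd i k n H)" by (rule nice_good[OF nice_rd gH])
  have gZ: "good d Z" unfolding Z_def by (rule nice_good[OF nice_funpow grF])
  have gW: "good d W" unfolding W_def by (rule nice_good[OF nice_funpow grH])
  have R1: "rd i k n F y = y i powr real m * Gh y" if y: "y \<in> simplex_interior d" for y
    unfolding Gh_def using nice_cong[OF nice_rd gF FG y] avoidsD[OF avoids_rd[OF i] gG y] by simp
  have R2: "rd i k n H y = y i powr (real m + 1) * Kh y" if y: "y \<in> simplex_interior d" for y
    unfolding Kh_def using nice_cong[OF nice_rd gH HK y] avoidsD[OF avoids_rd[OF i] gK y] by simp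
  have R3: "pdiff i Gh y = - a * Kh y" if y: "y \<in> simplex_interior d" for y
  proof -
    have "pdiff i Gh y = rd i k n (pdiff i G) y" unfolding Gh_def by (rule nice_comm[OF nice_rd gG y])
    also have "\<dots> = rd i k n (\<lambda>z. - a * K z) y" by (rule nice_cong[OF nice_rd good_pdiff[OF gG] DG y])
    also have "\<dots> = - a * Kh y" unfolding Kh_def by (rule nice_cmult[OF nice_rd gK y])
    finally show ?thesis .
  qed
  have Z1: "y i * Z y = - a * W y" if y: "y \<in> simplex_interior d" for y
  proof -
    have "Z y = (pdiff i ^^ Suc m) (\<lambda>z. z i powr real m * Gh z) y"
      unfolding Z_def by (rule nice_cong[OF nice_funpow grF R1 y])
    then have "y i * Z y = (pdiff i ^^ m) (\<lambda>z. z i powr (real m + 1) * pdiff i Gh z) y"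
      using oneD[OF i gGh y, of m] by simp
    also have "\<dots> = (pdiff i ^^ m) (\<lambda>z. - a * (z i powr (real m + 1) * Kh z)) y"
      by (rule nice_cong[OF nice_funpow good_mulpow[OF i good_pdiff[OF gGh]] _ y]) (simp add: R3)
    also have "\<dots> = - a * (pdiff i ^^ m) (\<lambda>z. z i powr (real m + 1) * Kh z) y"
      by (rule nice_cmult[OF nice_funpow good_mulpow[OF i gKh] y])
    also have "(pdiff i ^^ m) (\<lambda>z. z i powr (real m + 1) * Kh z) y = W y"
      unfolding W_def by (rule nice_cong[OF nice_funpow good_mulpow[OF i gKh] _ y]) (simp add: R2)
    finally show ?thesis .
  qed
  have i0i: "i0 < i" using i0 by simp
  have MZW: "x i * mixed_diff i0 n Z x = - a * mixed_diff i0 n W x"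
  proof -
    have xi: "0 < x i" using pos[OF xU] .
    have "x i * mixed_diff i0 n Z x = mixed_diff i0 n (\<lambda>y. y i powr 1 * Z y) x"
      using avoidsD[OF avoids_mixed[OF i i0i] gZ xU, where p=1] xi by simp
    also have "\<dots> = mixed_diff i0 n (\<lambda>y. - a * W y) x"
      by (rule nice_cong[OF nice_mixed good_mulpow[OF i gZ] _ xU]) (simp add: Z1 pos less_imp_le)
    also have "\<dots> = - a * mixed_diff i0 n W x" by (rule nice_cmult[OF nice_mixed gW xU])
    finally show ?thesis .
  qed
  have MF: "mixed_diff d n F x = mixed_diff i0 n Z x"
    unfolding k mixed_rd Z_def using m i0 by simp
  have MH: "mixed_diff d n' H x = mixed_diff i0 n W x"
  proof -
    have "rd i k n' H = rd i k n H" by (rule rd_cong_n) (auto simp: n'_def)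
    moreover have "mixed_diff i0 n' X = mixed_diff i0 n X" for X by (rule mixed_cong_n) (auto simp: n'_def i0)
    ultimately show ?thesis unfolding k mixed_rd W_def using m i0 by (simp add: n'_def)
  qed
  define Q where "Q = (\<Prod>k\<in>{1..d}-{i}. x k powr (- \<gamma> k))"
  define Sg where "Sg = (1 - (\<Sum>k=1..d. x k)) powr (- g)"
  have PL: "simplex_P d \<gamma> g n x = x i powr 1 * Q * Sg * mixed_diff d n F x"
    unfolding simplex_P_def F_def Q_def Sg_def
    using prod_split[OF i, of "\<lambda>k. x k powr (- \<gamma> k)"] assms(3) by simp
  have PR: "simplex_P d \<gamma>' g n' x = x i powr (-1) * Q * Sg * mixed_diff d n' H x"
  proof -
    have "(\<Prod>k\<in>{1..d}-{i}. x k powr (- \<gamma>' k)) = Q" unfolding Q_def \<gamma>'_def by (rule prod.cong) auto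
    then show ?thesis unfolding simplex_P_def H_def Sg_def
      using prod_split[OF i, of "\<lambda>k. x k powr (- \<gamma>' k)"] assms(3) by (simp add: \<gamma>'_def)
  qed
  have xi: "0 < x i" using pos[OF xU] .
  have "simplex_P d \<gamma> g n x = Q * Sg * (x i * mixed_diff i0 n Z x)"
    unfolding PL MF using xi by simp
  also have "\<dots> = Q * Sg * (- a * mixed_diff i0 n W x)" unfolding MZW ..
  also have "\<dots> = - a * x i * simplex_P d \<gamma>' g n' x"
    unfolding PR MH using xi by (simp add: powr_minus field_simps)
  finally show ?thesis unfolding a_def \<gamma>'_def n'_def by (simp add: algebra_simps)
qed

end
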